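(* Let $(k_i)_{i\in\mathbb N}\subset\mathbb N$ satisfy $k_{2i}>1$ for infinitely many $i$ and $k_{2i-1}>1$ for infinitely many $i$. Then $\bigcap_{n\ge1} Q^+B_{k_n}B_{k_{n-1}}\cdots B_{k_1}$ is a single half-line; equivalently, for every nonzero $\vec a\in Q^+$ the limit $(u,v,w)=\lim_{n\to\infty}\frac{\vec aB_{k_n}\cdots B_{k_1}}{\|\vec aB_{k_n}\cdots B_{k_1}\|_1}$ exists and is independent of $\vec a$, i.e. the direction $(u,v,w)$ is uniquely determined by $(k_i)_{i\in\mathbb N}$.
   Context: Vectors are row vectors and matrices act by right multiplication. $Q^+=\{x\in\mathbb R^3:x_i\ge0\}$. For $k\in\mathbb N$, $B_k=\begin{pmatrix}0&1&k-1\\1&0&0\\0&1&k\end{pmatrix}$ (this equals $UA_k^{-1}U^{-1}$ with $A_k=\begin{pmatrix}0&k&k-1\\1&0&0\\0&1&1\end{pmatrix}$ and $U=\begin{pmatrix}0&1&0\\1&0&0\\0&0&-1\end{pmatrix}$); each $B_k$ maps $Q^+$ into itself. *)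

theory Defs
  imports "HOL-Analysis.Analysis"
begin

text \<open>Row vectors in R^3 are elements of real^3; matrices act by right
multiplication, x v* M.  Rows of B_k are (0,1,k-1), (1,0,0), (0,1,k).\<close>

definition Bmat :: "nat \<Rightarrow> real^3^3" where
  "Bmat k = vector [vector [0, 1, real k - 1], vector [1, 0, 0], vector [0, 1, real k]]"

definition Qplus :: "(real^3) set" where
  "Qplus = {x. \<forall>i. 0 \<le> x $ i}"

fun prodB :: "(nat \<Rightarrow> nat) \<Rightarrow> nat \<Rightarrow> real^3^3" where
  "prodB k 0 = mat 1"
| "prodB k (Suc n) = Bmat (k (Suc n)) ** prodB k n"

definition norm1 :: "real^3 \<Rightarrow> real" where
  "norm1 x = (\<Sum>i\<in>UNIV. \<bar>x $ i\<bar>)"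

end

theory Submission
  imports Defs
begin

definition S3 :: "real^3 \<Rightarrow> real" where "S3 x = (\<Sum>i\<in>UNIV. x$i)"

lemma S3_3: "S3 x = x$1 + x$2 + x$3"
  by (simp add: S3_def sum_3)

lemma vB: "x v* Bmat m = vector [x$2, x$1 + x$3, (real m - 1) * x$1 + real m * x$3]"
  unfolding Bmat_def vector_matrix_mult_def
  by (simp add: vec_eq_iff forall_3 sum_3 algebra_simps)

lemma vB1: "(x v* Bmat m)$1 = x$2" "(x v* Bmat m)$2 = x$1 + x$3"
  "(x v* Bmat m)$3 = (real m - 1) * x$1 + real m * x$3"
  by (simp_all add: vB)

lemma prodB_Suc_v: "x v* prodB k (Suc n) = (x v* Bmat (k (Suc n))) v* prodB k n"
  by (simp add: vector_matrix_mul_assoc)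

lemma Qplus_iff: "x \<in> Qplus \<longleftrightarrow> 0 \<le> x$1 \<and> 0 \<le> x$2 \<and> 0 \<le> x$3"
  by (simp add: Qplus_def forall_3)

lemma vB_Q: assumes "x \<in> Qplus" "1 \<le> m" shows "x v* Bmat m \<in> Qplus"
  using assms by (simp add: Qplus_iff vB1)

lemma S3_vB: assumes "x \<in> Qplus" "1 \<le> m" shows "S3 x \<le> S3 (x v* Bmat m)"
proof -
  have "real m \<ge> 1" using assms by simp
  moreover have x0: "0 \<le> x$1" "0 \<le> x$3" using assms by (auto simp: Qplus_iff)
  ultimately have "(real m - 1) * x$1 \<ge> 0" "real m * x$3 \<ge> 1 * x$3"
    by (simp, intro mult_right_mono, simp_all)
  then show ?thesis using x0 by (simp add: S3_3 vB1)
qed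

definition Cn :: "(nat \<Rightarrow> nat) \<Rightarrow> nat \<Rightarrow> (real^3) set" where
  "Cn k n = (\<lambda>x. x v* prodB k n) ` Qplus"

context
  fixes k :: "nat \<Rightarrow> nat"
  assumes pos: "\<forall>i\<ge>1. k i \<ge> 1"
begin

lemma P_Q: "x \<in> Qplus \<Longrightarrow> x v* prodB k n \<in> Qplus"
proof (induction n arbitrary: x)
  case 0 then show ?case by simp
next
  case (Suc n)
  have "x v* Bmat (k (Suc n)) \<in> Qplus" using Suc.prems pos vB_Q by simp
  then show ?case using Suc.IH by (simp only: prodB_Suc_v)
qed

lemma P_S3: "x \<in> Qplus \<Longrightarrow> S3 x \<le> S3 (x v* prodB k n)"
proof (induction n arbitrary: x)
  case 0 then show ?case by simp
next
  case (Suc n)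
  have 1: "x v* Bmat (k (Suc n)) \<in> Qplus" using Suc.prems pos vB_Q by simp
  have "S3 x \<le> S3 (x v* Bmat (k (Suc n)))" using Suc.prems pos S3_vB by simp
  also have "\<dots> \<le> S3 (x v* prodB k (Suc n))" using Suc.IH[OF 1] by (simp only: prodB_Suc_v)
  finally show ?case .
qed


lemma Cn_Q: "Cn k n \<subseteq> Qplus"
  using P_Q by (auto simp: Cn_def)

lemma Cn_Suc: "Cn k (Suc n) \<subseteq> Cn k n"
proof
  fix y assume "y \<in> Cn k (Suc n)"
  then obtain x where x: "x \<in> Qplus" "y = x v* prodB k (Suc n)" by (auto simp: Cn_def)
  have "x v* Bmat (k (Suc n)) \<in> Qplus" using x pos vB_Q by simp
  then show "y \<in> Cn k n" using x unfolding Cn_def prodB_Suc_v by blast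
qed

lemma Cn_mono: "n \<le> m \<Longrightarrow> Cn k m \<subseteq> Cn k n"
  by (induction m rule: dec_induct) (use Cn_Suc in auto)

end

lemma vm_nth: "(z v* G)$t = (\<Sum>l\<in>UNIV. z$l * G$l$t)"
  by (simp add: vector_matrix_mult_def)

lemma S3_vm: "S3 (z v* G) = (\<Sum>l\<in>UNIV. z$l * S3 (G$l))"
  unfolding S3_def vector_matrix_mult_def
  by (simp add: sum_distrib_left) (rule sum.swap)

lemma combo:
  fixes G :: "real^3^3" and z z' :: "real^3"
  assumes z0: "\<forall>l. 0 \<le> z$l" and z'0: "\<forall>l. 0 \<le> z'$l"
    and pair: "\<forall>l l'. \<bar>G$l$t * S3 (G$l') - G$l'$t * S3 (G$l)\<bar> \<le> D * S3 (G$l) * S3 (G$l')"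
  shows "\<bar>(z v* G)$t * S3 (z' v* G) - (z' v* G)$t * S3 (z v* G)\<bar>
     \<le> D * (S3 (z v* G) * S3 (z' v* G) - (\<Sum>l\<in>UNIV. z$l * z'$l * S3 (G$l)^2))"
proof -
  define X where "X l l' = G$l$t * S3 (G$l') - G$l'$t * S3 (G$l)" for l l'
  have p1: "(\<Sum>l\<in>UNIV. z$l * G$l$t) * (\<Sum>l'\<in>UNIV. z'$l' * S3 (G$l'))
      = (\<Sum>l\<in>UNIV. \<Sum>l'\<in>UNIV. z$l * G$l$t * (z'$l' * S3 (G$l')))"
    by (rule sum_product)
  have p2: "(\<Sum>l'\<in>UNIV. z'$l' * G$l'$t) * (\<Sum>l\<in>UNIV. z$l * S3 (G$l))
      = (\<Sum>l\<in>UNIV. \<Sum>l'\<in>UNIV. z$l * S3 (G$l) * (z'$l' * G$l'$t))"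
    by (subst mult.commute, rule sum_product)
  have id: "(z v* G)$t * S3 (z' v* G) - (z' v* G)$t * S3 (z v* G)
      = (\<Sum>l\<in>UNIV. \<Sum>l'\<in>UNIV. z$l * z'$l' * X l l')"
    unfolding vm_nth S3_vm p1 p2 sum_subtractf[symmetric] X_def
    by (intro sum.cong refl) (simp add: algebra_simps)
  have "\<bar>\<Sum>l\<in>UNIV. \<Sum>l'\<in>UNIV. z$l * z'$l' * X l l'\<bar>
      \<le> (\<Sum>l\<in>UNIV. \<Sum>l'\<in>UNIV. \<bar>z$l * z'$l' * X l l'\<bar>)"
    by (rule order_trans[OF sum_abs sum_mono]) (rule sum_abs)
  also have "\<dots> \<le> (\<Sum>l\<in>UNIV. \<Sum>l'\<in>UNIV. z$l * z'$l' *
        (D * S3 (G$l) * S3 (G$l') - (if l = l' then D * S3 (G$l)^2 else 0)))"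
  proof (intro sum_mono)
    fix l l' :: 3
    have zz: "0 \<le> z$l * z'$l'" using z0 z'0 by simp
    show "\<bar>z$l * z'$l' * X l l'\<bar> \<le> z$l * z'$l' *
        (D * S3 (G$l) * S3 (G$l') - (if l = l' then D * S3 (G$l)^2 else 0))"
    proof (cases "l = l'")
      case True then show ?thesis by (simp add: X_def power2_eq_square)
    next
      case False
      have "\<bar>z$l * z'$l' * X l l'\<bar> = z$l * z'$l' * \<bar>X l l'\<bar>"
        using zz by (metis abs_mult abs_of_nonneg)
      also have "\<dots> \<le> z$l * z'$l' * (D * S3 (G$l) * S3 (G$l'))"
        using pair zz unfolding X_def by (intro mult_left_mono) auto
      finally show ?thesis using False by simp
    qed
  qed
  also have "\<dots> = D * (S3 (z v* G) * S3 (z' v* G) - (\<Sum>l\<in>UNIV. z$l * z'$l * S3 (G$l)^2))"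
    unfolding S3_vm by (simp add: sum_3 algebra_simps power2_eq_square)
  finally show ?thesis unfolding id .
qed

lemma row_mul: "(A ** B)$i = (A$i) v* (B::real^3^3)"
  by (simp add: matrix_matrix_mult_def vector_matrix_mult_def vec_eq_iff mult.commute)

lemma axis_vm: "axis l (1::real) v* (G::real^3^3) = G$l"
  using exhaust_3[of l] by (auto simp: vector_matrix_mult_def vec_eq_iff axis_def sum_3)

lemma axis_Q: "axis l (1::real) \<in> Qplus"
  by (simp add: Qplus_def axis_def)

lemma vec3_eq: "(x::real^3) = y \<longleftrightarrow> x$1 = y$1 \<and> x$2 = y$2 \<and> x$3 = y$3"
  by (simp add: vec_eq_iff forall_3)

context
  fixes k :: "nat \<Rightarrow> nat"
  assumes pos: "\<forall>i\<ge>1. k i \<ge> 1"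
begin

lemma rows_Q: "prodB k n $ l \<in> Qplus"
proof -
  have "axis l 1 v* prodB k n \<in> Qplus" by (rule P_Q[OF pos axis_Q])
  then show ?thesis by (simp add: axis_vm)
qed

lemma rowsum_inv: "S3 (prodB k n $ 1) \<le> S3 (prodB k n $ 3) \<and> S3 (prodB k n $ 2) \<le> S3 (prodB k n $ 3)"
proof (induction n)
  case 0 then show ?case by (simp add: S3_3 mat_def)
next
  case (Suc n)
  let ?P = "prodB k n" and ?m = "k (Suc n)"
  have m1: "real ?m \<ge> 1" using pos by simp
  have e: "S3 (prodB k (Suc n) $ i) = (\<Sum>l\<in>UNIV. Bmat ?m $ i $ l * S3 (?P $ l))" for i
    by (simp add: row_mul S3_vm)
  have nn: "0 \<le> S3 (?P $ l)" for l using rows_Q[of n l] by (simp add: S3_3 Qplus_iff)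
  have a: "S3 (prodB k (Suc n) $ 1) = S3 (?P$2) + (real ?m - 1) * S3 (?P$3)"
    unfolding e by (simp add: sum_3 Bmat_def)
  have b: "S3 (prodB k (Suc n) $ 2) = S3 (?P$1)"
    unfolding e by (simp add: sum_3 Bmat_def)
  have c: "S3 (prodB k (Suc n) $ 3) = S3 (?P$2) + real ?m * S3 (?P$3)"
    unfolding e by (simp add: sum_3 Bmat_def)
  have "real ?m * S3 (?P$3) \<ge> 1 * S3 (?P$3)" using m1 nn[of 3] by (intro mult_right_mono) auto
  then show ?case unfolding a b c using Suc.IH nn[of 2] nn[of 3] by (auto simp: algebra_simps)
qed

lemma ones:
  assumes "\<forall>i. 1 \<le> i \<and> i \<le> 2*j \<longrightarrow> k (s+1+i) = 1"
  shows "x v* prodB k (s+1+2*j) = vector [x$1 + real j * x$3, x$2 + real j * x$3, x$3] v* prodB k (s+1)"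
  using assms
proof (induction j arbitrary: x)
  case 0
  have "vector [x$1 + real 0 * x$3, x$2 + real 0 * x$3, x$3] = x" by (simp add: vec3_eq)
  then show ?case by simp
next
  case (Suc j)
  have k1: "k (Suc (Suc (s+1+2*j))) = 1" "k (Suc (s+1+2*j)) = 1"
    using Suc.prems[rule_format, of "2*j+2"] Suc.prems[rule_format, of "2*j+1"]
    by (simp_all add: algebra_simps)
  have eq: "s+1+2*Suc j = Suc (Suc (s+1+2*j))" by simp
  have "x v* prodB k (s+1+2*Suc j) = ((x v* Bmat 1) v* Bmat 1) v* prodB k (s+1+2*j)"
    unfolding eq prodB_Suc_v k1 ..
  also have "\<dots> = vector [x$1 + real (Suc j) * x$3, x$2 + real (Suc j) * x$3, x$3] v* prodB k (s+1)"
    using Suc.IH[of "(x v* Bmat 1) v* Bmat 1"] Suc.prems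
    by (simp add: vB1 vec3_eq algebra_simps)
  finally show ?case .
qed

end

definition goodc :: "(nat \<Rightarrow> nat) \<Rightarrow> nat \<Rightarrow> real \<Rightarrow> bool" where
  "goodc k n D \<longleftrightarrow> (\<forall>u\<in>Cn k n. \<forall>v\<in>Cn k n. \<forall>t.
      \<bar>u$t * S3 v - v$t * S3 u\<bar> \<le> D * S3 u * S3 v)"

context
  fixes k :: "nat \<Rightarrow> nat"
  assumes pos: "\<forall>i\<ge>1. k i \<ge> 1"
begin

lemma window_vec:
  assumes k1: "2 \<le> k (Suc s)" and k2: "2 \<le> k (s + 2*j + 2)"
    and on1: "\<forall>i. 1 \<le> i \<and> i \<le> 2*j \<longrightarrow> k (s+1+i) = 1" and y: "y \<in> Qplus"
  shows "\<exists>z\<in>Qplus. y v* prodB k (s+2*j+2) = z v* prodB k s \<and> z$1 + z$2 \<le> 2 * z$3"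
proof -
  define m1 where "m1 = real (k (Suc s))"
  define m2 where "m2 = real (k (s+2*j+2))"
  have m1: "m1 \<ge> 2" and m2: "m2 \<ge> 2" using k1 k2 by (simp_all add: m1_def m2_def)
  have y0: "0 \<le> y$1" "0 \<le> y$2" "0 \<le> y$3" using y by (simp_all add: Qplus_iff)
  define p where "p = y$2"
  define q where "q = y$1 + y$3"
  define r where "r = (m2 - 1) * y$1 + m2 * y$3"
  define w :: "real^3" where "w = vector [p + real j * r, q + real j * r, r]"
  define z where "z = w v* Bmat (k (Suc s))"
  have p0: "0 \<le> p" and q0: "0 \<le> q" using y0 by (simp_all add: p_def q_def)
  have "(m2 - 1) * y$1 \<ge> 1 * y$1" "m2 * y$3 \<ge> 1 * y$3"
    using m2 y0 by (intro mult_right_mono; simp)+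
  then have rq: "q \<le> r" by (simp add: q_def r_def)
  have r0: "0 \<le> r" using rq q0 by simp
  have jr: "0 \<le> real j * r" using r0 by simp
  have e1: "s + 2*j + 2 = Suc (s+1+2*j)" by simp
  have "y v* prodB k (s+2*j+2) = (y v* Bmat (k (s+2*j+2))) v* prodB k (s+1+2*j)"
    unfolding e1 prodB_Suc_v by (simp add: e1[symmetric])
  also have "\<dots> = w v* prodB k (s+1)"
    unfolding ones[OF pos on1] w_def
    by (simp add: vB1 p_def q_def r_def m2_def)
  also have "\<dots> = z v* prodB k s"
    unfolding z_def using prodB_Suc_v[of w k s] by simp
  finally have eq: "y v* prodB k (s+2*j+2) = z v* prodB k s" .
  have z1: "z$1 = q + real j * r" and z2: "z$2 = p + real j * r + r"
    and z3: "z$3 = (m1 - 1) * (p + real j * r) + m1 * r"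
    by (simp_all add: z_def w_def vB1 m1_def)
  have f1: "(m1 - 1) * (p + real j * r) \<ge> 1 * (p + real j * r)"
    using m1 p0 jr by (intro mult_right_mono) auto
  have f2: "m1 * r \<ge> 2 * r" using m1 r0 by (intro mult_right_mono) auto
  have g1: "0 \<le> (m1 - 1) * (p + real j * r)" using m1 p0 jr by simp
  have g2: "0 \<le> m1 * r" using m1 r0 by simp
  have zQ: "z \<in> Qplus" unfolding Qplus_iff z1 z2 z3 using g1 g2 p0 q0 r0 jr
    by (intro conjI add_nonneg_nonneg) auto
  have aux: "q + Z + (p + Z + r) \<le> 2 * (X + Y)"
    if "p + Z \<le> X" "2*r \<le> Y" "0 \<le> Z" for X Y Z :: real using that rq p0 r0 by argo
  have "z$1 + z$2 \<le> 2 * z$3" unfolding z1 z2 z3 using f1 f2 jr by (intro aux) auto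
  then show ?thesis using eq zQ by blast
qed

lemma goodc_mono: "goodc k n D \<Longrightarrow> n \<le> m \<Longrightarrow> D \<le> D' \<Longrightarrow> goodc k m D'"
proof -
  assume g: "goodc k n D" and nm: "n \<le> m" and DD: "D \<le> D'"
  show "goodc k m D'" unfolding goodc_def
  proof (intro ballI allI)
    fix u v t assume u: "u \<in> Cn k m" and v: "v \<in> Cn k m"
    have uQ: "u \<in> Qplus" and vQ: "v \<in> Qplus" using u v Cn_Q[OF pos] by auto
    have "0 \<le> S3 u * S3 v" using uQ vQ by (simp add: S3_3 Qplus_iff)
    then have "D * S3 u * S3 v \<le> D' * S3 u * S3 v" using DD
      by (metis mult.assoc mult_right_mono)
    moreover have "\<bar>u$t * S3 v - v$t * S3 u\<bar> \<le> D * S3 u * S3 v"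
      using g u v Cn_mono[OF pos nm] unfolding goodc_def by blast
    ultimately show "\<bar>u$t * S3 v - v$t * S3 u\<bar> \<le> D' * S3 u * S3 v" by linarith
  qed
qed

lemma Q_comp: "u \<in> Qplus \<Longrightarrow> 0 \<le> u$t \<and> u$t \<le> S3 u"
  using exhaust_3[of t] by (auto simp: Qplus_iff S3_3)

lemma goodc_1: "goodc k n 1"
  unfolding goodc_def
proof (intro ballI allI)
  fix u v t assume u: "u \<in> Cn k n" and v: "v \<in> Cn k n"
  have uQ: "u \<in> Qplus" and vQ: "v \<in> Qplus" using u v Cn_Q[OF pos] by auto
  have a: "0 \<le> u$t" "u$t \<le> S3 u" "0 \<le> v$t" "v$t \<le> S3 v" using Q_comp uQ vQ by auto
  have "u$t * S3 v \<le> S3 u * S3 v" using a by (intro mult_right_mono) auto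
  moreover have "S3 u * v$t \<le> S3 u * S3 v" using a by (intro mult_left_mono) auto
  then have "v$t * S3 u \<le> S3 u * S3 v" by (simp add: mult.commute)
  moreover have "0 \<le> u$t * S3 v" "0 \<le> v$t * S3 u" using a by auto
  ultimately show "\<bar>u$t * S3 v - v$t * S3 u\<bar> \<le> 1 * S3 u * S3 v" by (simp add: abs_le_iff)
qed

lemma window_good:
  assumes k1: "2 \<le> k (Suc s)" and k2: "2 \<le> k (s + 2*j + 2)"
    and on1: "\<forall>i. 1 \<le> i \<and> i \<le> 2*j \<longrightarrow> k (s+1+i) = 1"
    and g: "goodc k s D" and D0: "0 \<le> D"
  shows "goodc k (s+2*j+2) (8/9 * D)"
  unfolding goodc_def
proof (intro ballI allI)
  fix u v t assume u: "u \<in> Cn k (s+2*j+2)" and v: "v \<in> Cn k (s+2*j+2)"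
  let ?G = "prodB k s"
  obtain y where y: "y \<in> Qplus" "u = y v* prodB k (s+2*j+2)" using u unfolding Cn_def image_iff by blast
  obtain y' where y': "y' \<in> Qplus" "v = y' v* prodB k (s+2*j+2)" using v unfolding Cn_def image_iff by blast
  obtain z where z: "z \<in> Qplus" "u = z v* ?G" "z$1 + z$2 \<le> 2 * z$3"
    using window_vec[OF k1 k2 on1 y(1)] y(2) by auto
  obtain z' where z': "z' \<in> Qplus" "v = z' v* ?G" "z'$1 + z'$2 \<le> 2 * z'$3"
    using window_vec[OF k1 k2 on1 y'(1)] y'(2) by auto
  have rowsC: "?G$l \<in> Cn k s" for l
    unfolding Cn_def using axis_vm[of l ?G] axis_Q[of l] by (metis image_eqI)
  have pair: "\<forall>l l'. \<bar>?G$l$t * S3 (?G$l') - ?G$l'$t * S3 (?G$l)\<bar> \<le> D * S3 (?G$l) * S3 (?G$l')"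
    using g rowsC unfolding goodc_def by blast
  have z0: "\<forall>l. 0 \<le> z$l" "\<forall>l. 0 \<le> z'$l" using z(1) z'(1) by (auto simp: Qplus_def)
  have c: "\<bar>u$t * S3 v - v$t * S3 u\<bar>
      \<le> D * (S3 u * S3 v - (\<Sum>l\<in>UNIV. z$l * z'$l * S3 (?G$l)^2))"
    using combo[OF z0 pair] z(2) z'(2) by simp
  define A where "A l = S3 (?G$l)" for l
  have A0: "0 \<le> A l" for l using rows_Q[OF pos, of s l] by (simp add: A_def S3_3 Qplus_iff)
  have inv: "A 1 \<le> A 3" "A 2 \<le> A 3" using rowsum_inv[OF pos, of s] by (simp_all add: A_def)
  have Su: "S3 u = z$1 * A 1 + z$2 * A 2 + z$3 * A 3" using z(2) by (simp add: S3_vm sum_3 A_def)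
  have Sv: "S3 v = z'$1 * A 1 + z'$2 * A 2 + z'$3 * A 3" using z'(2) by (simp add: S3_vm sum_3 A_def)
  have zz: "0 \<le> z$i" "0 \<le> z'$i" for i using z0 by auto
  have "z$1 * A 1 \<le> z$1 * A 3" "z$2 * A 2 \<le> z$2 * A 3"
    "z'$1 * A 1 \<le> z'$1 * A 3" "z'$2 * A 2 \<le> z'$2 * A 3"
    using inv zz by (simp_all add: mult_left_mono)
  then have Sub: "S3 u \<le> (z$1 + z$2 + z$3) * A 3" "S3 v \<le> (z'$1 + z'$2 + z'$3) * A 3"
    unfolding Su Sv by (simp_all add: algebra_simps)
  have Sub2: "S3 u \<le> 3 * z$3 * A 3" "S3 v \<le> 3 * z'$3 * A 3"
  proof -
    have "(z$1 + z$2 + z$3) * A 3 \<le> (3 * z$3) * A 3" using z(3) A0[of 3] by (intro mult_right_mono) auto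
    then show "S3 u \<le> 3 * z$3 * A 3" using Sub by simp
    have "(z'$1 + z'$2 + z'$3) * A 3 \<le> (3 * z'$3) * A 3" using z'(3) A0[of 3] by (intro mult_right_mono) auto
    then show "S3 v \<le> 3 * z'$3 * A 3" using Sub by simp
  qed
  have Su0: "0 \<le> S3 u" "0 \<le> S3 v" unfolding Su Sv using zz A0 by simp_all
  have "S3 u * S3 v \<le> (3 * z$3 * A 3) * (3 * z'$3 * A 3)"
    using Sub2 Su0 A0[of 3] zz[of 3] by (intro mult_mono) auto
  then have prod: "S3 u * S3 v \<le> 9 * (z$3 * z'$3 * A 3 ^ 2)" by (simp add: algebra_simps power2_eq_square)
  have "z$3 * z'$3 * A 3 ^ 2 \<le> (\<Sum>l\<in>UNIV. z$l * z'$l * S3 (?G$l)^2)"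
    unfolding sum_3 A_def using zz by simp
  then have "S3 u * S3 v - (\<Sum>l\<in>UNIV. z$l * z'$l * S3 (?G$l)^2) \<le> 8/9 * (S3 u * S3 v)"
    using prod by simp
  then have "D * (S3 u * S3 v - (\<Sum>l\<in>UNIV. z$l * z'$l * S3 (?G$l)^2)) \<le> D * (8/9 * (S3 u * S3 v))"
    using D0 by (rule mult_left_mono)
  then show "\<bar>u$t * S3 v - v$t * S3 u\<bar> \<le> 8/9 * D * S3 u * S3 v" using c by (simp add: algebra_simps)
qed

end

lemma find_window:
  fixes k :: "nat \<Rightarrow> nat"
  shows "e < e' \<Longrightarrow> odd (e' - e) \<Longrightarrow> 1 \<le> e \<Longrightarrow> 1 < k e \<Longrightarrow> 1 < k e' \<Longrightarrow>
     \<exists>a b. e \<le> a \<and> a < b \<and> odd (b - a) \<and> 1 \<le> a \<and> 1 < k a \<and> 1 < k b \<and>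
        (\<forall>i. a < i \<and> i < b \<longrightarrow> \<not> 1 < k i)"
proof (induction "e' - e" arbitrary: e e' rule: less_induct)
  case (less e e')
  show ?case
  proof (cases "\<forall>i. e < i \<and> i < e' \<longrightarrow> \<not> 1 < k i")
    case True then show ?thesis using less.prems by blast
  next
    case False
    then obtain i where i: "e < i" "i < e'" "1 < k i" by blast
    have sd: "(i - e) + (e' - i) = e' - e" using i by auto
    have "odd (i - e) \<or> odd (e' - i)"
    proof (rule ccontr)
      assume "\<not> (odd (i - e) \<or> odd (e' - i))"
      then have "even ((i - e) + (e' - i))" by simp
      then show False using sd less.prems(2) by simp
    qed
    then show ?thesis
    proof
      assume o: "odd (i - e)"
      have "i - e < e' - e" using i by auto
      from less.hyps[OF this i(1) o less.prems(3,4) i(3)] show ?thesis by blast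
    next
      assume o: "odd (e' - i)"
      have "e' - i < e' - e" using i by auto
      have "1 \<le> i" using i less.prems(3) by simp
      from less.hyps[OF \<open>e' - i < e' - e\<close> i(2) o this i(3) less.prems(5)]
      obtain a b where "i \<le> a \<and> a < b \<and> odd (b - a) \<and> 1 \<le> a \<and> 1 < k a \<and> 1 < k b \<and>
          (\<forall>i. a < i \<and> i < b \<longrightarrow> \<not> 1 < k i)" by blast
      then show ?thesis using i(1) by (meson less_imp_le order_trans)
    qed
  qed
qed

context
  fixes k :: "nat \<Rightarrow> nat"
  assumes pos: "\<forall>i\<ge>1. k i \<ge> 1"
    and even_inf: "infinite {i. i \<ge> 1 \<and> k (2 * i) > 1}"
    and odd_inf: "infinite {i. i \<ge> 1 \<and> k (2 * i - 1) > 1}"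
begin

lemma window_exists:
  "\<exists>s j. n0 \<le> s \<and> 2 \<le> k (Suc s) \<and> 2 \<le> k (s+2*j+2) \<and> (\<forall>i. 1 \<le> i \<and> i \<le> 2*j \<longrightarrow> k (s+1+i) = 1)"
proof -
  obtain i where i: "i > n0" "i \<ge> 1" "k (2*i) > 1"
    using even_inf unfolding infinite_nat_iff_unbounded by blast
  obtain i' where i': "i' > i" "i' \<ge> 1" "k (2*i' - 1) > 1"
    using odd_inf unfolding infinite_nat_iff_unbounded by blast
  have lt: "2*i < 2*i' - 1" using i' by simp
  have o: "odd ((2*i' - 1) - 2*i)" using i' by (simp add: odd_iff_mod_2_eq_one)
  have e1: "1 \<le> 2*i" using i by simp
  obtain a b where ab: "2*i \<le> a" "a < b" "odd (b - a)" "1 \<le> a" "1 < k a" "1 < k b"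
      "\<forall>l. a < l \<and> l < b \<longrightarrow> \<not> 1 < k l"
    using find_window[OF lt o e1 i(3) i'(3)] by blast
  obtain j where j: "b - a = 2*j + 1" using ab(3) oddE by blast
  define s where "s = a - 1"
  have sa: "Suc s = a" using ab(4) by (simp add: s_def)
  have sb: "s + 2*j + 2 = b" using sa j ab(2) by simp
  have "\<forall>l. 1 \<le> l \<and> l \<le> 2*j \<longrightarrow> k (s+1+l) = 1"
  proof (intro allI impI)
    fix l assume l: "1 \<le> l \<and> l \<le> 2*j"
    have "\<not> 1 < k (s+1+l)" using ab(7) l sa sb by auto
    moreover have "1 \<le> k (s+1+l)" using pos by simp
    ultimately show "k (s+1+l) = 1" by linarith
  qed
  moreover have "n0 \<le> s" using i ab(1) by (simp add: s_def)
  ultimately show ?thesis using sa sb ab(5,6) by (intro exI[of _ s] exI[of _ j]) auto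
qed

lemma good_pow: "\<exists>n. goodc k n ((8/9)^m)"
proof (induction m)
  case 0 show ?case using goodc_1[OF pos] by auto
next
  case (Suc m)
  then obtain n where n: "goodc k n ((8/9)^m)" by blast
  obtain s j where sj: "n \<le> s" "2 \<le> k (Suc s)" "2 \<le> k (s+2*j+2)"
      "\<forall>i. 1 \<le> i \<and> i \<le> 2*j \<longrightarrow> k (s+1+i) = 1"
    using window_exists by blast
  have "goodc k s ((8/9)^m)" using goodc_mono[OF pos n sj(1)] by simp
  from window_good[OF pos sj(2,3,4) this] show ?case by auto
qed

lemma good_eps: "0 < e \<Longrightarrow> \<exists>n0. \<forall>n\<ge>n0. goodc k n e"
proof -
  assume e: "0 < e"
  obtain m where m: "(8/9::real)^m < e" using real_arch_pow_inv[OF e, of "8/9"] by auto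
  obtain n0 where "goodc k n0 ((8/9)^m)" using good_pow by blast
  then show ?thesis using goodc_mono[OF pos] m by (meson less_imp_le)
qed

end

lemma S3_scale: "S3 (c *\<^sub>R x) = c * S3 x"
  by (simp add: S3_3 algebra_simps)

lemma S3_0: "S3 0 = 0" by (simp add: S3_3)

lemma Q_S3_pos: "x \<in> Qplus \<Longrightarrow> x \<noteq> 0 \<Longrightarrow> 0 < S3 x"
proof -
  assume x: "x \<in> Qplus" "x \<noteq> 0"
  have "x$1 \<noteq> 0 \<or> x$2 \<noteq> 0 \<or> x$3 \<noteq> 0" using x(2) by (auto simp: vec3_eq)
  then show ?thesis using x(1) by (auto simp: S3_3 Qplus_iff)
qed

lemma norm1_Q: "x \<in> Qplus \<Longrightarrow> norm1 x = S3 x"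
  by (simp add: norm1_def S3_def Qplus_def)

definition hat :: "real^3 \<Rightarrow> real^3" where "hat x = (1 / S3 x) *\<^sub>R x"

lemma hat_S3: "S3 x \<noteq> 0 \<Longrightarrow> S3 (hat x) = 1"
  by (simp add: hat_def S3_scale)

lemma hat_Q: "x \<in> Qplus \<Longrightarrow> hat x \<in> Qplus"
proof -
  assume x: "x \<in> Qplus"
  then have "0 \<le> S3 x" by (simp add: S3_3 Qplus_iff)
  then show ?thesis using x by (simp add: hat_def Qplus_def)
qed

definition Binv :: "nat \<Rightarrow> real^3^3" where
  "Binv m = vector [vector [0, 1, 0], vector [real m, 0, -(real m - 1)], vector [-1, 0, 1]]"

lemma B_Binv: "Bmat m ** Binv m = mat 1"
  by (simp add: matrix_matrix_mult_def Bmat_def Binv_def vec_eq_iff forall_3 sum_3 mat_def algebra_simps)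

fun Pinv :: "(nat \<Rightarrow> nat) \<Rightarrow> nat \<Rightarrow> real^3^3" where
  "Pinv k 0 = mat 1"
| "Pinv k (Suc n) = Pinv k n ** Binv (k (Suc n))"

lemma P_Pinv: "prodB k n ** Pinv k n = mat 1"
proof (induction n)
  case 0 then show ?case by simp
next
  case (Suc n)
  have "prodB k (Suc n) ** Pinv k (Suc n) = Bmat (k (Suc n)) ** ((prodB k n ** Pinv k n) ** Binv (k (Suc n)))"
    by (simp add: matrix_mul_assoc)
  also have "\<dots> = mat 1" using Suc.IH B_Binv by simp
  finally show ?case .
qed

lemma Pinv_P: "Pinv k n ** prodB k n = mat 1"
  using P_Pinv matrix_left_right_inverse by blast

context
  fixes k :: "nat \<Rightarrow> nat"
  assumes pos: "\<forall>i\<ge>1. k i \<ge> 1"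
    and even_inf: "infinite {i. i \<ge> 1 \<and> k (2 * i) > 1}"
    and odd_inf: "infinite {i. i \<ge> 1 \<and> k (2 * i - 1) > 1}"
begin

lemma Cn_S3: "x \<in> Cn k n \<Longrightarrow> x \<noteq> 0 \<Longrightarrow> 0 < S3 x"
  using Cn_Q[OF pos] Q_S3_pos by blast

lemma hat_bound:
  assumes g: "goodc k n D" and u: "u \<in> Cn k n" and v: "v \<in> Cn k n" and u0: "u \<noteq> 0" and v0: "v \<noteq> 0"
  shows "\<bar>hat u $ t - hat v $ t\<bar> \<le> D"
proof -
  have su: "0 < S3 u" and sv: "0 < S3 v" using Cn_S3 u v u0 v0 by auto
  have b: "\<bar>u$t * S3 v - v$t * S3 u\<bar> \<le> D * (S3 u * S3 v)"
    using g u v unfolding goodc_def by (simp add: mult.assoc)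
  have "hat u $ t - hat v $ t = (u$t * S3 v - v$t * S3 u) / (S3 u * S3 v)"
    using su sv by (simp add: hat_def field_simps)
  then have "\<bar>hat u $ t - hat v $ t\<bar> = \<bar>u$t * S3 v - v$t * S3 u\<bar> / (S3 u * S3 v)"
    using su sv by simp
  also have "\<dots> \<le> D" using b su sv by (simp add: pos_divide_le_eq)
  finally show ?thesis .
qed

definition a0 :: "real^3" where "a0 = vector [1, 1, 1]"

lemma a0Q: "a0 \<in> Qplus" by (simp add: a0_def Qplus_iff)

definition fs :: "nat \<Rightarrow> real^3" where "fs n = hat (a0 v* prodB k n)"

lemma sq_C: "a0 v* prodB k n \<in> Cn k n" using a0Q by (simp add: Cn_def)

lemma sq_nz: "a0 v* prodB k n \<noteq> 0"
proof -
  have "S3 a0 \<le> S3 (a0 v* prodB k n)" by (rule P_S3[OF pos a0Q])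
  then show ?thesis by (auto simp: a0_def S3_3 S3_0)
qed

lemma fs_Cauchy: "Cauchy (\<lambda>n. fs n $ t)"
proof (rule CauchyI)
  fix e :: real assume e: "0 < e"
  obtain n0 where n0: "\<forall>n\<ge>n0. goodc k n (e/2)" using good_eps[OF pos even_inf odd_inf, of "e/2"] e by auto
  show "\<exists>M. \<forall>m\<ge>M. \<forall>n\<ge>M. norm (fs m $ t - fs n $ t) < e"
  proof (intro exI allI impI)
    fix m n assume m: "n0 \<le> m" and n: "n0 \<le> n"
    have "a0 v* prodB k m \<in> Cn k n0" "a0 v* prodB k n \<in> Cn k n0"
      using sq_C Cn_mono[OF pos m] Cn_mono[OF pos n] by auto
    then have "\<bar>fs m $ t - fs n $ t\<bar> \<le> e/2"
      unfolding fs_def using hat_bound n0 sq_nz by blast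
    then show "norm (fs m $ t - fs n $ t) < e" using e by simp
  qed
qed

definition dd :: "real^3" where "dd = (\<chi> t. lim (\<lambda>n. fs n $ t))"

lemma fs_lim: "(\<lambda>n. fs n $ t) \<longlonglongrightarrow> dd $ t"
  using fs_Cauchy[of t] unfolding Cauchy_convergent_iff dd_def
  by (simp add: convergent_LIMSEQ_iff)

lemma key:
  assumes g: "goodc k n D" and x: "x \<in> Cn k n" and x0: "x \<noteq> 0"
  shows "\<bar>hat x $ t - dd $ t\<bar> \<le> D"
proof (rule LIMSEQ_le_const2)
  show "(\<lambda>m. \<bar>hat x $ t - fs m $ t\<bar>) \<longlonglongrightarrow> \<bar>hat x $ t - dd $ t\<bar>"
    by (intro tendsto_intros fs_lim)
  show "\<exists>N. \<forall>m\<ge>N. \<bar>hat x $ t - fs m $ t\<bar> \<le> D"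
  proof (intro exI allI impI)
    fix m assume m: "n \<le> m"
    have "a0 v* prodB k m \<in> Cn k n" using sq_C Cn_mono[OF pos m] by auto
    then show "\<bar>hat x $ t - fs m $ t\<bar> \<le> D" unfolding fs_def using hat_bound g x x0 sq_nz by blast
  qed
qed

lemma dd_Q: "dd \<in> Qplus"
  unfolding Qplus_def
proof (intro CollectI allI)
  fix t
  show "0 \<le> dd $ t"
  proof (rule LIMSEQ_le_const[OF fs_lim])
    show "\<exists>N. \<forall>n\<ge>N. 0 \<le> fs n $ t"
      using hat_Q[OF P_Q[OF pos a0Q]] by (auto simp: fs_def Qplus_def)
  qed
qed

lemma dd_S3: "S3 dd = 1"
proof -
  have "(\<lambda>n. S3 (fs n)) \<longlonglongrightarrow> S3 dd"
    unfolding S3_3 by (intro tendsto_intros fs_lim)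
  moreover have "S3 (fs n) = 1" for n
  proof -
    have "0 < S3 (a0 v* prodB k n)" by (rule Cn_S3[OF sq_C sq_nz])
    then have "S3 (a0 v* prodB k n) \<noteq> 0" by simp
    then show ?thesis by (simp add: fs_def hat_S3)
  qed
  ultimately show ?thesis using LIMSEQ_unique by (simp add: LIMSEQ_const_iff)
qed

lemma key_eq:
  assumes x: "\<forall>n\<ge>1. x \<in> Cn k n" and x0: "x \<noteq> 0"
  shows "hat x = dd"
proof -
  have "hat x $ t = dd $ t" for t
  proof (rule ccontr)
    assume ne: "hat x $ t \<noteq> dd $ t"
    define e where "e = \<bar>hat x $ t - dd $ t\<bar> / 2"
    have e0: "0 < e" using ne by (simp add: e_def)
    obtain n0 where n0: "\<forall>n\<ge>n0. goodc k n e" using good_eps[OF pos even_inf odd_inf e0] by blast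
    have "\<bar>hat x $ t - dd $ t\<bar> \<le> e"
      using key[OF n0[rule_format, of "max n0 1"] x[rule_format, of "max n0 1"] x0] by simp
    then show False using e0 by (simp add: e_def)
  qed
  then show ?thesis by (simp add: vec_eq_iff)
qed

lemma dd_in: "1 \<le> n \<Longrightarrow> 0 \<le> c \<Longrightarrow> c *\<^sub>R dd \<in> Cn k n"
proof -
  assume c: "0 \<le> c"
  define g where "g m = fs m v* Pinv k n" for m
  have gQ: "g m \<in> Qplus" if m: "n \<le> m" for m
  proof -
    obtain y where y: "y \<in> Qplus" "a0 v* prodB k m = y v* prodB k n"
      using sq_C Cn_mono[OF pos m] unfolding Cn_def by blast
    have sp: "0 < S3 (a0 v* prodB k m)" by (rule Cn_S3[OF sq_C sq_nz])
    have "g m = ((1 / S3 (a0 v* prodB k m)) *\<^sub>R y) v* (prodB k n ** Pinv k n)"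
      unfolding g_def fs_def hat_def y(2) scaleR_vector_matrix_assoc vector_matrix_mul_assoc ..
    also have "\<dots> = (1 / S3 (a0 v* prodB k m)) *\<^sub>R y" by (simp add: P_Pinv)
    finally show ?thesis using y(1) sp by (simp add: Qplus_def)
  qed
  have gl: "(\<lambda>m. g m $ j) \<longlonglongrightarrow> (dd v* Pinv k n) $ j" for j
    unfolding g_def vm_nth by (intro tendsto_intros fs_lim)
  have wQ: "dd v* Pinv k n \<in> Qplus"
    unfolding Qplus_def
  proof (intro CollectI allI)
    fix j show "0 \<le> (dd v* Pinv k n) $ j"
      using gQ by (intro LIMSEQ_le_const[OF gl]) (auto simp: Qplus_def)
  qed
  have "c *\<^sub>R dd = (c *\<^sub>R (dd v* Pinv k n)) v* prodB k n"
    by (simp add: scaleR_vector_matrix_assoc vector_matrix_mul_assoc Pinv_P)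
  moreover have "c *\<^sub>R (dd v* Pinv k n) \<in> Qplus" using wQ c by (simp add: Qplus_def)
  ultimately show ?thesis unfolding Cn_def by blast
qed

end

theorem lemma3p3:
  fixes k :: "nat \<Rightarrow> nat"
  assumes pos: "\<forall>i\<ge>1. k i \<ge> 1"
    and even_inf: "infinite {i. i \<ge> 1 \<and> k (2 * i) > 1}"
    and odd_inf: "infinite {i. i \<ge> 1 \<and> k (2 * i - 1) > 1}"
  shows "\<exists>d :: real^3. d \<noteq> 0 \<and>
           (\<Inter>n\<in>{1..}. (\<lambda>x. x v* prodB k n) ` Qplus) = {t *\<^sub>R d | t. t \<ge> 0} \<and>
           (\<forall>a\<in>Qplus. a \<noteq> 0 \<longrightarrow>
              (\<lambda>n. (1 / norm1 (a v* prodB k n)) *\<^sub>R (a v* prodB k n))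
                \<longlonglongrightarrow> (1 / norm1 d) *\<^sub>R d)"
proof -
  let ?d = "dd k"
  have S: "S3 ?d = 1" by (rule dd_S3[OF pos even_inf odd_inf])
  have dQ: "?d \<in> Qplus" by (rule dd_Q[OF pos even_inf odd_inf])
  have d0: "?d \<noteq> 0" using S by (auto simp: S3_0)
  have n1: "norm1 ?d = 1" using norm1_Q[OF dQ] S by simp
  have inter: "(\<Inter>n\<in>{1..}. (\<lambda>x. x v* prodB k n) ` Qplus) = {t *\<^sub>R ?d | t. t \<ge> 0}"
  proof
    show "(\<Inter>n\<in>{1..}. (\<lambda>x. x v* prodB k n) ` Qplus) \<subseteq> {t *\<^sub>R ?d | t. t \<ge> 0}"
    proof
      fix x assume x: "x \<in> (\<Inter>n\<in>{1..}. (\<lambda>x. x v* prodB k n) ` Qplus)"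
      then have xC: "\<forall>n\<ge>1. x \<in> Cn k n" unfolding Cn_def by auto
      show "x \<in> {t *\<^sub>R ?d | t. t \<ge> 0}"
      proof (cases "x = 0")
        case True then show ?thesis by auto
      next
        case False
        have xQ: "x \<in> Qplus" using xC Cn_Q[OF pos] by auto
        have sp: "0 < S3 x" by (rule Q_S3_pos[OF xQ False])
        have "hat x = ?d" by (rule key_eq[OF pos even_inf odd_inf xC False])
        then have "S3 x *\<^sub>R hat x = S3 x *\<^sub>R ?d" by simp
        then have "x = S3 x *\<^sub>R ?d" using sp by (simp add: hat_def)
        then show ?thesis using sp by auto
      qed
    qed
    show "{t *\<^sub>R ?d | t. t \<ge> 0} \<subseteq> (\<Inter>n\<in>{1..}. (\<lambda>x. x v* prodB k n) ` Qplus)"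
      using dd_in[OF pos even_inf odd_inf] unfolding Cn_def by auto
  qed
  have lim: "\<forall>a\<in>Qplus. a \<noteq> 0 \<longrightarrow>
      (\<lambda>n. (1 / norm1 (a v* prodB k n)) *\<^sub>R (a v* prodB k n)) \<longlonglongrightarrow> (1 / norm1 ?d) *\<^sub>R ?d"
  proof (intro ballI impI)
    fix a assume a: "a \<in> Qplus" "a \<noteq> 0"
    have xC: "a v* prodB k n \<in> Cn k n" for n using a by (simp add: Cn_def)
    have x0: "a v* prodB k n \<noteq> 0" for n
    proof -
      have "0 < S3 a" by (rule Q_S3_pos[OF a])
      also have "S3 a \<le> S3 (a v* prodB k n)" by (rule P_S3[OF pos a(1)])
      finally show ?thesis by (auto simp: S3_0)
    qed
    have eq: "(1 / norm1 (a v* prodB k n)) *\<^sub>R (a v* prodB k n) = hat (a v* prodB k n)" for n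
      using norm1_Q[OF P_Q[OF pos a(1)]] by (simp add: hat_def)
    have "(\<lambda>n. hat (a v* prodB k n)) \<longlonglongrightarrow> ?d"
    proof (rule vec_tendstoI)
      fix t show "(\<lambda>n. hat (a v* prodB k n) $ t) \<longlonglongrightarrow> ?d $ t"
      proof (rule LIMSEQ_I)
        fix r :: real assume r: "0 < r"
        obtain n0 where n0: "\<forall>n\<ge>n0. goodc k n (r/2)"
          using good_eps[OF pos even_inf odd_inf, of "r/2"] r by auto
        show "\<exists>no. \<forall>n\<ge>no. norm (hat (a v* prodB k n) $ t - ?d $ t) < r"
        proof (intro exI allI impI)
          fix n assume "n0 \<le> n"
          then have "\<bar>hat (a v* prodB k n) $ t - ?d $ t\<bar> \<le> r/2"
            using key[OF pos even_inf odd_inf n0[rule_format, OF \<open>n0 \<le> n\<close>] xC x0] by blast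
          then show "norm (hat (a v* prodB k n) $ t - ?d $ t) < r" using r by simp
        qed
      qed
    qed
    then show "(\<lambda>n. (1 / norm1 (a v* prodB k n)) *\<^sub>R (a v* prodB k n)) \<longlonglongrightarrow> (1 / norm1 ?d) *\<^sub>R ?d"
      unfolding eq n1 by simp
  qed
  show ?thesis using d0 inter lim by blast
qed


end
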